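(* There is an absolute constant $C>0$ such that the following holds. Let $Q,N\in\mathbb{N}$ with $N\ge 2$, let $(a_n)_{n\in\mathbb{Z}[i]}$ be complex numbers, $Z=\sum_{n\in\mathbb{Z}[i],\ \mathcal{N}(n)\le N}|a_n|^2$, let $\mathcal{S}\subseteq B(0,Q^{1/2})\cap(\mathbb{Z}[i]\setminus\{0\})$, and let $0<\Delta\le1/2$. Let $$U=\sum_{q\in\mathcal{S}}\ \sum_{\substack{a\bmod q\\ (a,q)=1}}\Big|\sum_{\substack{n\in\mathbb{Z}[i]\\ \mathcal{N}(n)\le N}}a_n\, e\Big(\Re\Big(\frac{na}{q}\Big)\Big)\Big|^2.$$ For $q=u+iv\in\mathcal{S}$ and $a=x+iy\in\mathbb{Z}[i]$ put $\xi(a,q)=\big(\frac{xu+yv}{\mathcal{N}(q)},\frac{xv-yu}{\mathcal{N}(q)}\big)\in\mathbb{R}^2$, and let $$K(\Delta)=\sup_{\alpha\in\mathbb{R}^2}\Big|\Big\{(a,q):\ q\in\mathcal{S},\ a\in\mathcal{R}_q,\ \min_{z\in\mathbb{Z}^2}\|\xi(a,q)-\alpha-z\|_2\le\Delta^{1/2}\Big\}\Big|,$$ where for each $q$, $\mathcal{R}_q$ is a complete system of representatives of the residue classes modulo $q$ in $\mathbb{Z}[i]$ coprime to $q$. Then $U\le C\,K(\Delta)(N+\Delta^{-1})Z$.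
   Context: $e(x)=e^{2\pi i x}$. $\mathcal{N}(q)=\Re(q)^2+\Im(q)^2$; $B(y,u)=\{w\in\mathbb{C}:|w-y|\le u\}$; $\|\cdot\|_2$ is the Euclidean norm on $\mathbb{R}^2$. "$a\bmod q$, $(a,q)=1$" means $a$ runs over a complete system of residues modulo $q$ coprime to $q$. *)

theory Defs
  imports "HOL-Analysis.Analysis"
begin

definition gint :: "complex \<Rightarrow> bool" where
  "gint z \<longleftrightarrow> Re z \<in> \<int> \<and> Im z \<in> \<int>"

definition gdvd :: "complex \<Rightarrow> complex \<Rightarrow> bool" where
  "gdvd d a \<longleftrightarrow> (\<exists>k. gint k \<and> a = d * k)"

definition gcoprime :: "complex \<Rightarrow> complex \<Rightarrow> bool" where
  "gcoprime a q \<longleftrightarrow> (\<forall>d. gint d \<and> gdvd d a \<and> gdvd d q \<longrightarrow> gdvd d 1)"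

definition gcong :: "complex \<Rightarrow> complex \<Rightarrow> complex \<Rightarrow> bool" where
  "gcong a b q \<longleftrightarrow> gdvd q (a - b)"

definition reduced_residue_system :: "complex set \<Rightarrow> complex \<Rightarrow> bool" where
  "reduced_residue_system R q \<longleftrightarrow>
     (\<forall>a\<in>R. gint a \<and> gcoprime a q) \<and>
     (\<forall>a\<in>R. \<forall>b\<in>R. gcong a b q \<longrightarrow> a = b) \<and>
     (\<forall>b. gint b \<and> gcoprime b q \<longrightarrow> (\<exists>a\<in>R. gcong a b q))"

definition gnorm :: "complex \<Rightarrow> real" where
  "gnorm q = (Re q)^2 + (Im q)^2"

definition e :: "real \<Rightarrow> complex" where
  "e x = exp (2 * pi * \<i> * complex_of_real x)"

definition xi :: "complex \<Rightarrow> complex \<Rightarrow> real \<times> real" where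
  "xi a q = ((Re a * Re q + Im a * Im q) / gnorm q,
             (Re a * Im q - Im a * Re q) / gnorm q)"

text \<open>Distance of a point of R^2 to the lattice Z^2 (min over z in Z^2 of the
  Euclidean norm; the norm on real \<times> real is the Euclidean one).\<close>
definition lattice_dist :: "real \<times> real \<Rightarrow> real" where
  "lattice_dist v = Inf {norm (v - (real_of_int m, real_of_int k)) | m k. True}"

definition Kfun :: "complex set \<Rightarrow> (complex \<Rightarrow> complex set) \<Rightarrow> real \<Rightarrow> real" where
  "Kfun S R \<Delta> = (SUP \<alpha>\<in>(UNIV :: (real \<times> real) set).
      real (card {(a, q). q \<in> S \<and> a \<in> R q \<and> lattice_dist (xi a q - \<alpha>) \<le> sqrt \<Delta>}))"

end

theory Submission
  imports Defs
begin


lemma e_alt: "e x = exp (\<i> * complex_of_real (2*pi*x))"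
  unfolding e_def by (simp add: mult_ac)

lemma e_cis: "e x = cis (2*pi*x)"
  unfolding e_alt by (simp add: cis_conv_exp)

lemma e_add: "e (x + y) = e x * e y"
  unfolding e_def by (simp add: exp_add[symmetric] algebra_simps)

lemma norm_e [simp]: "cmod (e x) = 1"
  unfolding e_alt by (rule norm_exp_i_times)

lemma cnj_e: "cnj (e x) = e (- x)"
  unfolding e_alt by (simp add: exp_cnj)

lemma e_diff: "e (x - y) = e x * cnj (e y)"
  using e_add[of x "-y"] by (simp add: cnj_e)

lemma e_int [simp]: "e (real_of_int k) = 1"
proof -
  have "e (real_of_int k) = exp ((2 * complex_of_int k * pi) * \<i>)"
    unfolding e_def by (simp add: mult_ac)
  also have "\<dots> = 1" using exp_integer_2pi[of "of_int k"] by simp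
  finally show ?thesis .
qed

lemma e_frac: "e t = e (frac t)"
proof -
  have "t = real_of_int (floor t) + frac t" by (simp add: frac_def)
  then have "e t = e (real_of_int (floor t)) * e (frac t)" by (metis e_add)
  then show ?thesis by simp
qed

lemma e_nat_mult: "e (real n * t) = e t ^ n"
  unfolding e_def by (simp add: exp_of_nat_mult[symmetric] mult_ac)

lemma t1: "(\<Sum>m<3. sin_coeff m * (x::real) ^ m) = x"
    by (simp add: lessThan_nat_numeral sin_coeff_def)
lemma t2: "(fact 3::real) = 6" by (simp add: fact_numeral)
lemma sin_lower: assumes "0 \<le> x" "x \<le> pi/2" shows "x * (1 - x^2/6) \<le> sin x"
proof -
  have h: "\<bar>sin x - (\<Sum>m<3. sin_coeff m * x ^ m)\<bar> \<le> inverse (fact 3) * \<bar>x\<bar> ^ 3"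
    by (rule Maclaurin_sin_bound)
  have "inverse (fact 3) * \<bar>x\<bar> ^ 3 = x^3/6"
    using assms(1) by (simp only: t2) simp
  then have "\<bar>sin x - x\<bar> \<le> x^3/6" using h t1[of x] by simp
  then have "x - x^3/6 \<le> sin x" by linarith
  moreover have "x*(1-x^2/6) = x - x^3/6" by (simp add: algebra_simps power2_eq_square power3_eq_cube)
  ultimately show ?thesis by linarith
qed
lemma sin_pi_lower: assumes "0 \<le> f" "f \<le> 1/2" shows "f \<le> sin (pi * f)"
proof -
  have x0a: "0 \<le> pi * f" using assms by simp
  have "pi * f \<le> pi * (1/2)" using assms by (intro mult_left_mono) auto
  then have x0: "0 \<le> pi * f" "pi * f \<le> pi/2" using x0a by auto
  have "(pi*f)^2 \<le> (pi/2)^2" using x0 by (intro power_mono) auto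
  also have "(pi/2)^2 \<le> (4/2)^2" using pi_less_4 by (intro power_mono) auto
  finally have sq: "(pi*f)^2 \<le> 4" by simp
  have "pi * f * (1 - 4/6) \<le> pi * f * (1 - (pi*f)^2/6)"
  proof (rule mult_left_mono)
    have "(pi*f)^2/6 \<le> 4/6" using sq by (rule divide_right_mono) simp
    then show "1 - 4/6 \<le> 1 - (pi*f)^2/6" by linarith
  qed (rule x0a)
  also have "\<dots> \<le> sin (pi*f)" using sin_lower[OF x0] .
  finally have s1: "pi * f * (1 - 4/6) \<le> sin (pi*f)" .
  have "3 * f \<le> pi * f" by (rule mult_right_mono) (use pi_gt3 assms in auto)
  moreover have "pi*f*(1-4/6) = (pi*f)/3" by simp
  ultimately show ?thesis using s1 by linarith
qed

lemma norm_1_minus_e: "cmod (1 - e f) = 2 * \<bar>sin (pi * f)\<bar>"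
proof -
  define x where "x = pi * f"
  have "e f = Complex (cos (2*x)) (sin (2*x))" unfolding e_cis x_def by (simp add: cis.ctr mult_ac)
  then have "(cmod (1 - e f))^2 = (1 - cos (2*x))^2 + (sin (2*x))^2"
    by (simp add: cmod_power2)
  also have "\<dots> = 4 * (sin x)^2"
  proof -
    have alg: "(1 - (1 - 2*S^2))^2 + (2*S*C)^2 = 4*S^2*(S^2+C^2)" for S C :: real
      by (simp add: power2_eq_square algebra_simps)
    have p: "(sin x)^2 + (cos x)^2 = 1" by (rule sin_cos_squared_add)
    show ?thesis unfolding cos_double_sin sin_double alg p by simp
  qed
  finally have "(cmod (1 - e f))^2 = (2 * \<bar>sin x\<bar>)^2" by (simp add: power2_eq_square)
  then show ?thesis unfolding x_def
    by (metis abs_of_nonneg norm_ge_zero power2_eq_iff_nonneg zero_le_mult_iff zero_le_numeral abs_ge_zero)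
qed

definition Dk :: "nat \<Rightarrow> real \<Rightarrow> complex" where
  "Dk P t = (\<Sum>x<P. e (real x * t))"

lemma Dk_le_P: "cmod (Dk P t) \<le> real P"
proof -
  have "cmod (Dk P t) \<le> (\<Sum>x<P. cmod (e (real x * t)))" unfolding Dk_def by (rule norm_sum)
  then show ?thesis by simp
qed

lemma Dk_frac_bound:
  assumes "0 < min (frac t) (1 - frac t)"
  shows "cmod (Dk P t) \<le> 1 / min (frac t) (1 - frac t)"
proof -
  define f where "f = frac t"
  define w where "w = e t"
  have f01: "0 \<le> f" "f < 1" unfolding f_def by (auto simp: frac_lt_1)
  define \<mu> where "\<mu> = min f (1 - f)"
  have mu: "0 < \<mu>" "\<mu> \<le> 1/2" using assms unfolding \<mu>_def f_def by (auto simp: min_def)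
  have "\<mu> \<le> sin (pi * \<mu>)" using mu sin_pi_lower by auto
  also have "sin (pi * \<mu>) = sin (pi * f)"
  proof (cases "f \<le> 1 - f")
    case True then show ?thesis by (simp add: \<mu>_def)
  next
    case False
    then have "\<mu> = 1 - f" by (simp add: \<mu>_def)
    then show ?thesis by (simp add: right_diff_distrib sin_diff)
  qed
  finally have s: "\<mu> \<le> sin (pi * f)" .
  have nw: "cmod (1 - w) = 2 * \<bar>sin (pi*f)\<bar>" unfolding w_def f_def
    by (subst e_frac) (rule norm_1_minus_e)
  then have nw2: "2 * \<mu> \<le> cmod (1 - w)" using s by linarith
  then have w1: "w \<noteq> 1" using mu by auto
  have "Dk P t = (\<Sum>x<P. w ^ x)" unfolding Dk_def w_def by (simp add: e_nat_mult)
  also have "\<dots> = (1 - w^P) / (1 - w)" using w1 by (simp add: sum_gp_strict)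
  finally have "cmod (Dk P t) = cmod (1 - w^P) / cmod (1 - w)" by (simp add: norm_divide)
  also have "\<dots> \<le> 2 / cmod (1 - w)"
  proof (rule divide_right_mono)
    have "cmod (1 - w^P) \<le> cmod 1 + cmod (w^P)" by (rule norm_triangle_ineq4)
    also have "\<dots> = 2" by (simp add: w_def norm_power)
    finally show "cmod (1 - w^P) \<le> 2" .
  qed simp
  also have "\<dots> \<le> 2 / (2 * \<mu>)"
  proof -
    have "0 < cmod (1 - w)" using nw2 mu by linarith
    then show ?thesis using nw2 mu by (intro divide_left_mono) auto
  qed
  finally have "cmod (Dk P t) \<le> 2 / (2 * \<mu>)" .
  then have "cmod (Dk P t) \<le> 1 / \<mu>" by simp
  then show ?thesis unfolding \<mu>_def f_def .
qed



lemma duality: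
  fixes \<phi> :: "'n \<Rightarrow> 'r \<Rightarrow> complex" and b :: "'n \<Rightarrow> complex"
  assumes fin: "finite Dn" "finite I" and B0: "0 \<le> B"
  and H: "\<And>c. (\<Sum>n\<in>Dn. (cmod (\<Sum>r\<in>I. c r * \<phi> n r))^2) \<le> B * (\<Sum>r\<in>I. (cmod (c r))^2)"
  shows "(\<Sum>r\<in>I. (cmod (\<Sum>n\<in>Dn. b n * \<phi> n r))^2) \<le> B * (\<Sum>n\<in>Dn. (cmod (b n))^2)"
proof -
  define T where "T r = (\<Sum>n\<in>Dn. b n * \<phi> n r)" for r
  define c where "c r = cnj (T r)" for r
  define V where "V n = (\<Sum>r\<in>I. c r * \<phi> n r)" for n
  define U where "U = (\<Sum>r\<in>I. (cmod (T r))^2)"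
  define Z where "Z = (\<Sum>n\<in>Dn. (cmod (b n))^2)"
  have U0: "0 \<le> U" unfolding U_def by (simp add: sum_nonneg)
  have Z0: "0 \<le> Z" unfolding Z_def by (simp add: sum_nonneg)
  have "complex_of_real U = (\<Sum>r\<in>I. c r * T r)"
    unfolding U_def c_def of_real_sum by (intro sum.cong refl) (metis complex_norm_square mult.commute)
  also have "\<dots> = (\<Sum>r\<in>I. \<Sum>n\<in>Dn. b n * (c r * \<phi> n r))"
    by (simp add: T_def sum_distrib_left mult_ac)
  also have "\<dots> = (\<Sum>n\<in>Dn. \<Sum>r\<in>I. b n * (c r * \<phi> n r))" by (rule sum.swap)
  also have "\<dots> = (\<Sum>n\<in>Dn. b n * V n)" by (simp add: V_def sum_distrib_left)
  finally have Ueq: "complex_of_real U = (\<Sum>n\<in>Dn. b n * V n)" .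
  have "U = cmod (complex_of_real U)" using U0 by simp
  also have "\<dots> \<le> (\<Sum>n\<in>Dn. cmod (b n) * cmod (V n))"
    unfolding Ueq by (rule order_trans[OF norm_sum]) (simp add: norm_mult)
  finally have U1: "U \<le> (\<Sum>n\<in>Dn. cmod (b n) * cmod (V n))" .
  have "U^2 \<le> (\<Sum>n\<in>Dn. cmod (b n) * cmod (V n))^2"
    using U0 U1 by (intro power_mono) auto
  also have "\<dots> \<le> Z * (\<Sum>n\<in>Dn. (cmod (V n))^2)"
    unfolding Z_def by (rule Cauchy_Schwarz_ineq_sum)
  also have "\<dots> \<le> Z * (B * (\<Sum>r\<in>I. (cmod (c r))^2))"
    using H[of c] Z0 unfolding V_def by (intro mult_left_mono) auto
  also have "(\<Sum>r\<in>I. (cmod (c r))^2) = U" unfolding U_def c_def by simp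
  finally have UU: "U * U \<le> (Z * B) * U" by (simp add: power2_eq_square mult_ac)
  have "U \<le> B * Z"
  proof (cases "U > 0")
    case True
    then have "U \<le> Z * B" using UU by (rule mult_right_le_imp_le[rotated])
    then show ?thesis by (simp add: mult.commute)
  next
    case False
    then have "U = 0" using U0 by simp
    then show ?thesis using B0 Z0 by simp
  qed
  then show ?thesis unfolding U_def Z_def T_def .
qed

definition ch :: "int \<times> int \<Rightarrow> real \<times> real \<Rightarrow> complex" where
  "ch p t = e (real_of_int (fst p) * fst t + real_of_int (snd p) * snd t)"

lemma norm_ch [simp]: "cmod (ch p t) = 1" unfolding ch_def by simp

lemma ch_shift: "ch (fst n + fst k, snd n + snd k) t * cnj (ch k t) = ch n t"
proof -
  have "ch (fst n + fst k, snd n + snd k) t = ch n t * ch k t"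
    unfolding ch_def by (simp add: e_add[symmetric] algebra_simps)
  moreover have "ch k t * cnj (ch k t) = 1"
    using complex_norm_square[of "ch k t"] by simp
  ultimately show ?thesis by (simp add: mult.assoc)
qed

lemma ch_diff: "ch j t * cnj (ch j s) = ch j (fst t - fst s, snd t - snd s)"
proof -
  have "ch j t * cnj (ch j s) = e ((real_of_int (fst j) * fst t + real_of_int (snd j) * snd t) - (real_of_int (fst j) * fst s + real_of_int (snd j) * snd s))"
    unfolding ch_def by (rule e_diff[symmetric])
  also have "\<dots> = ch j (fst t - fst s, snd t - snd s)"
    unfolding ch_def by (simp add: algebra_simps)
  finally show ?thesis .
qed



lemma swap3: "(\<Sum>a\<in>A. \<Sum>b\<in>B. \<Sum>c\<in>C. f a b c) = (\<Sum>b\<in>B. \<Sum>c\<in>C. \<Sum>a\<in>A. f a b c)"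
proof -
  have "(\<Sum>a\<in>A. \<Sum>b\<in>B. \<Sum>c\<in>C. f a b c) = (\<Sum>b\<in>B. \<Sum>a\<in>A. \<Sum>c\<in>C. f a b c)" by (rule sum.swap)
  also have "\<dots> = (\<Sum>b\<in>B. \<Sum>c\<in>C. \<Sum>a\<in>A. f a b c)" by (rule sum.cong[OF refl], rule sum.swap)
  finally show ?thesis .
qed

lemma frob:
  fixes u :: "'r \<Rightarrow> 'j \<Rightarrow> complex"
  shows "complex_of_real (\<Sum>k\<in>J. \<Sum>j\<in>J. (cmod (\<Sum>r\<in>I. c r * (u r j * cnj (u r k))))^2)
    = (\<Sum>r\<in>I. \<Sum>r'\<in>I. c r * cnj (c r') * ((\<Sum>j\<in>J. u r j * cnj (u r' j)) * cnj (\<Sum>j\<in>J. u r j * cnj (u r' j))))"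
proof -
  have "complex_of_real (\<Sum>k\<in>J. \<Sum>j\<in>J. (cmod (\<Sum>r\<in>I. c r * (u r j * cnj (u r k))))^2)
     = (\<Sum>k\<in>J. \<Sum>j\<in>J. (\<Sum>r\<in>I. c r * (u r j * cnj (u r k))) * cnj (\<Sum>r\<in>I. c r * (u r j * cnj (u r k))))"
    unfolding of_real_sum by (intro sum.cong refl) (rule complex_norm_square)
  also have "\<dots> = (\<Sum>k\<in>J. \<Sum>j\<in>J. \<Sum>r\<in>I. \<Sum>r'\<in>I. c r * cnj (c r') * ((u r j * cnj (u r' j)) * (cnj (u r k) * u r' k)))"
  proof (rule sum.cong[OF refl], rule sum.cong[OF refl])
    fix k j
    have pw: "c r * (u r j * cnj (u r k)) * cnj (c r' * (u r' j * cnj (u r' k))) = c r * cnj (c r') * ((u r j * cnj (u r' j)) * (cnj (u r k) * u r' k))" for r r'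
      by (simp add: mult_ac)
    have "(\<Sum>r\<in>I. c r * (u r j * cnj (u r k))) * cnj (\<Sum>r\<in>I. c r * (u r j * cnj (u r k)))
       = (\<Sum>r\<in>I. c r * (u r j * cnj (u r k))) * (\<Sum>r'\<in>I. cnj (c r' * (u r' j * cnj (u r' k))))"
      by (simp only: cnj_sum)
    also have "\<dots> = (\<Sum>r\<in>I. \<Sum>r'\<in>I. c r * (u r j * cnj (u r k)) * cnj (c r' * (u r' j * cnj (u r' k))))"
      by (rule sum_product)
    also have "\<dots> = (\<Sum>r\<in>I. \<Sum>r'\<in>I. c r * cnj (c r') * ((u r j * cnj (u r' j)) * (cnj (u r k) * u r' k)))"
      by (simp only: pw)
    finally show "(\<Sum>r\<in>I. c r * (u r j * cnj (u r k))) * cnj (\<Sum>r\<in>I. c r * (u r j * cnj (u r k))) = (\<Sum>r\<in>I. \<Sum>r'\<in>I. c r * cnj (c r') * ((u r j * cnj (u r' j)) * (cnj (u r k) * u r' k)))" .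
  qed
  also have "\<dots> = (\<Sum>k\<in>J. \<Sum>r\<in>I. \<Sum>r'\<in>I. \<Sum>j\<in>J. c r * cnj (c r') * ((u r j * cnj (u r' j)) * (cnj (u r k) * u r' k)))"
    by (rule sum.cong[OF refl], rule swap3)
  also have "\<dots> = (\<Sum>r\<in>I. \<Sum>r'\<in>I. \<Sum>k\<in>J. \<Sum>j\<in>J. c r * cnj (c r') * ((u r j * cnj (u r' j)) * (cnj (u r k) * u r' k)))"
    by (rule swap3)
  also have "\<dots> = (\<Sum>r\<in>I. \<Sum>r'\<in>I. c r * cnj (c r') * ((\<Sum>j\<in>J. u r j * cnj (u r' j)) * cnj (\<Sum>j\<in>J. u r j * cnj (u r' j))))"
  proof (rule sum.cong[OF refl], rule sum.cong[OF refl])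
    fix r r'
    have "c r * cnj (c r') * ((\<Sum>j\<in>J. u r j * cnj (u r' j)) * cnj (\<Sum>j\<in>J. u r j * cnj (u r' j)))
      = c r * cnj (c r') * ((\<Sum>j\<in>J. u r j * cnj (u r' j)) * (\<Sum>k\<in>J. cnj (u r k) * u r' k))"
      by (simp add: cnj_sum mult.commute)
    also have "\<dots> = c r * cnj (c r') * (\<Sum>j\<in>J. \<Sum>k\<in>J. (u r j * cnj (u r' j)) * (cnj (u r k) * u r' k))"
      by (simp only: sum_product)
    also have "\<dots> = (\<Sum>j\<in>J. \<Sum>k\<in>J. c r * cnj (c r') * ((u r j * cnj (u r' j)) * (cnj (u r k) * u r' k)))"
      by (simp only: sum_distrib_left)
    also have "\<dots> = (\<Sum>k\<in>J. \<Sum>j\<in>J. c r * cnj (c r') * ((u r j * cnj (u r' j)) * (cnj (u r k) * u r' k)))"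
      by (rule sum.swap)
    finally show "(\<Sum>k\<in>J. \<Sum>j\<in>J. c r * cnj (c r') * ((u r j * cnj (u r' j)) * (cnj (u r k) * u r' k))) = c r * cnj (c r') * ((\<Sum>j\<in>J. u r j * cnj (u r' j)) * cnj (\<Sum>j\<in>J. u r j * cnj (u r' j)))" by simp
  qed
  finally show ?thesis .
qed

lemma quad_bound:
  fixes c :: "'r \<Rightarrow> complex" and G :: "'r \<Rightarrow> 'r \<Rightarrow> real"
  assumes sym: "\<And>r r'. G r r' = G r' r" and nn: "\<And>r r'. 0 \<le> G r r'"
  shows "Re (\<Sum>r\<in>I. \<Sum>r'\<in>I. c r * cnj (c r') * complex_of_real (G r r'))
     \<le> (\<Sum>r\<in>I. (cmod (c r))^2 * (\<Sum>r'\<in>I. G r r'))"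
proof -
  have "Re (\<Sum>r\<in>I. \<Sum>r'\<in>I. c r * cnj (c r') * complex_of_real (G r r'))
      \<le> cmod (\<Sum>r\<in>I. \<Sum>r'\<in>I. c r * cnj (c r') * complex_of_real (G r r'))"
    by (rule complex_Re_le_cmod)
  also have "\<dots> \<le> (\<Sum>r\<in>I. \<Sum>r'\<in>I. cmod (c r) * cmod (c r') * G r r')"
  proof -
    have "cmod (\<Sum>r\<in>I. \<Sum>r'\<in>I. c r * cnj (c r') * complex_of_real (G r r'))
       \<le> (\<Sum>r\<in>I. cmod (\<Sum>r'\<in>I. c r * cnj (c r') * complex_of_real (G r r')))" by (rule norm_sum)
    also have "\<dots> \<le> (\<Sum>r\<in>I. \<Sum>r'\<in>I. cmod (c r * cnj (c r') * complex_of_real (G r r')))"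
      by (intro sum_mono norm_sum)
    also have "\<dots> = (\<Sum>r\<in>I. \<Sum>r'\<in>I. cmod (c r) * cmod (c r') * G r r')"
      using nn by (simp add: norm_mult)
    finally show ?thesis .
  qed
  also have "\<dots> \<le> (\<Sum>r\<in>I. \<Sum>r'\<in>I. ((cmod (c r))^2 / 2 + (cmod (c r'))^2 / 2) * G r r')"
  proof (intro sum_mono mult_right_mono nn)
    fix r r'
    have "0 \<le> (cmod (c r) - cmod (c r'))^2" by simp
    then show "cmod (c r) * cmod (c r') \<le> (cmod (c r))^2 / 2 + (cmod (c r'))^2 / 2"
      by (simp add: power2_eq_square algebra_simps)
  qed
  also have "\<dots> = (\<Sum>r\<in>I. \<Sum>r'\<in>I. (cmod (c r))^2 / 2 * G r r') + (\<Sum>r\<in>I. \<Sum>r'\<in>I. (cmod (c r'))^2 / 2 * G r r')"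
    by (simp add: distrib_right sum.distrib)
  also have "(\<Sum>r\<in>I. \<Sum>r'\<in>I. (cmod (c r'))^2 / 2 * G r r') = (\<Sum>r'\<in>I. \<Sum>r\<in>I. (cmod (c r'))^2 / 2 * G r' r)"
    by (subst sum.swap) (simp add: sym)
  also have "(\<Sum>r\<in>I. \<Sum>r'\<in>I. (cmod (c r))^2 / 2 * G r r') + (\<Sum>r'\<in>I. \<Sum>r\<in>I. (cmod (c r'))^2 / 2 * G r' r)
     = (\<Sum>r\<in>I. (cmod (c r))^2 * (\<Sum>r'\<in>I. G r r'))"
  proof -
    have X: "(\<Sum>r\<in>I. \<Sum>r'\<in>I. (cmod (c r))^2 / 2 * G r r') = (\<Sum>r\<in>I. (cmod (c r))^2 / 2 * (\<Sum>r'\<in>I. G r r'))"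
      by (simp add: sum_distrib_left)
    have "(\<Sum>r\<in>I. (cmod (c r))^2 / 2 * (\<Sum>r'\<in>I. G r r')) + (\<Sum>r\<in>I. (cmod (c r))^2 / 2 * (\<Sum>r'\<in>I. G r r'))
       = (\<Sum>r\<in>I. (cmod (c r))^2 / 2 * (\<Sum>r'\<in>I. G r r') + (cmod (c r))^2 / 2 * (\<Sum>r'\<in>I. G r r'))"
      by (rule sum.distrib[symmetric])
    also have "\<dots> = (\<Sum>r\<in>I. (cmod (c r))^2 * (\<Sum>r'\<in>I. G r r'))"
      by (rule sum.cong[OF refl]) (simp add: field_simps)
    finally show ?thesis using X by simp
  qed
  finally show ?thesis .
qed



lemma Dk_int_sum: "(\<Sum>x\<in>{0..int m}. e (real_of_int x * t)) = Dk (Suc m) t"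
proof -
  have "{0..int m} = int ` {0..m}" by (simp add: image_int_atLeastAtMost)
  then have "(\<Sum>x\<in>{0..int m}. e (real_of_int x * t)) = (\<Sum>n\<in>{0..m}. e (real_of_int (int n) * t))"
    by (simp add: sum.reindex)
  also have "\<dots> = (\<Sum>n<Suc m. e (real n * t))"
    by (simp add: atLeast0AtMost lessThan_Suc_atMost)
  finally show ?thesis unfolding Dk_def .
qed

lemma box_sum: "(\<Sum>j\<in>{0..int m} \<times> {0..int m}. ch j t) = Dk (Suc m) (fst t) * Dk (Suc m) (snd t)"
proof -
  have "(\<Sum>j\<in>{0..int m} \<times> {0..int m}. ch j t) = (\<Sum>x\<in>{0..int m}. \<Sum>y\<in>{0..int m}. ch (x, y) t)"
    by (simp add: sum.cartesian_product)
  also have "\<dots> = (\<Sum>x\<in>{0..int m}. \<Sum>y\<in>{0..int m}. e (real_of_int x * fst t) * e (real_of_int y * snd t))"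
    unfolding ch_def by (simp add: e_add)
  also have "\<dots> = (\<Sum>x\<in>{0..int m}. e (real_of_int x * fst t)) * (\<Sum>y\<in>{0..int m}. e (real_of_int y * snd t))"
    by (simp add: sum_product)
  finally show ?thesis by (simp add: Dk_int_sum)
qed

lemma Dk_neg: "cmod (Dk P (- t)) = cmod (Dk P t)"
proof -
  have "Dk P (- t) = cnj (Dk P t)" unfolding Dk_def by (simp add: cnj_sum cnj_e)
  then show ?thesis by simp
qed

lemma kernel:
  fixes \<xi> :: "'r \<Rightarrow> real \<times> real" and c :: "'r \<Rightarrow> complex" and L :: nat
  assumes I: "finite I" and Dn: "Dn \<subseteq> {-int L..int L} \<times> {-int L..int L}"
  shows "(real (L+1))^2 * (\<Sum>n\<in>Dn. (cmod (\<Sum>r\<in>I. c r * ch n (\<xi> r)))^2)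
    \<le> (\<Sum>r\<in>I. (cmod (c r))^2 * (\<Sum>r'\<in>I. (cmod (Dk (3*L+1) (fst (\<xi> r) - fst (\<xi> r'))))^2 * (cmod (Dk (3*L+1) (snd (\<xi> r) - snd (\<xi> r'))))^2))"
proof -
  define Box where "Box = {0..int(3*L)} \<times> {0..int(3*L)}"
  define Kb where "Kb = {int L..int(2*L)} \<times> {int L..int(2*L)}"
  define V where "V n = (\<Sum>r\<in>I. c r * ch n (\<xi> r))" for n
  define W where "W j k = (\<Sum>r\<in>I. c r * (ch j (\<xi> r) * cnj (ch k (\<xi> r))))" for j k
  define G where "G r r' = (cmod (Dk (3*L+1) (fst (\<xi> r) - fst (\<xi> r'))))^2 * (cmod (Dk (3*L+1) (snd (\<xi> r) - snd (\<xi> r'))))^2" for r r'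
  have finBox: "finite Box" unfolding Box_def by simp
  have KbBox: "Kb \<subseteq> Box" unfolding Kb_def Box_def by auto
  have step_a: "(\<Sum>n\<in>Dn. (cmod (V n))^2) \<le> (\<Sum>j\<in>Box. (cmod (W j k))^2)" if k: "k \<in> Kb" for k
  proof -
    define tr where "tr n = (fst n + fst k, snd n + snd k)" for n :: "int \<times> int"
    have inj: "inj_on tr Dn" unfolding tr_def inj_on_def by (auto simp: prod_eq_iff)
    have sub: "tr ` Dn \<subseteq> Box" using Dn k unfolding tr_def Box_def Kb_def by force
    have VW: "V n = W (tr n) k" for n unfolding V_def W_def tr_def by (simp add: ch_shift)
    have "(\<Sum>n\<in>Dn. (cmod (V n))^2) = (\<Sum>n\<in>Dn. (cmod (W (tr n) k))^2)" by (simp add: VW)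
    also have "\<dots> = (\<Sum>j\<in>tr ` Dn. (cmod (W j k))^2)" by (simp add: sum.reindex[OF inj])
    also have "\<dots> \<le> (\<Sum>j\<in>Box. (cmod (W j k))^2)" by (rule sum_mono2[OF finBox sub]) simp
    finally show ?thesis .
  qed
  have c1: "card {int L..int(2*L)} = L+1" by (simp add: nat_add_distrib)
  have cardKb: "card Kb = (L+1)^2" unfolding Kb_def card_cartesian_product c1 by (simp add: power2_eq_square)
  have "(real (L+1))^2 * (\<Sum>n\<in>Dn. (cmod (V n))^2) = (\<Sum>k\<in>Kb. \<Sum>n\<in>Dn. (cmod (V n))^2)"
    using cardKb by simp
  also have "\<dots> \<le> (\<Sum>k\<in>Kb. \<Sum>j\<in>Box. (cmod (W j k))^2)" by (rule sum_mono) (rule step_a)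
  also have "\<dots> \<le> (\<Sum>k\<in>Box. \<Sum>j\<in>Box. (cmod (W j k))^2)"
    by (rule sum_mono2[OF finBox KbBox]) (simp add: sum_nonneg)
  also have "\<dots> = Re (complex_of_real (\<Sum>k\<in>Box. \<Sum>j\<in>Box. (cmod (W j k))^2))" by simp
  also have "complex_of_real (\<Sum>k\<in>Box. \<Sum>j\<in>Box. (cmod (W j k))^2) = (\<Sum>r\<in>I. \<Sum>r'\<in>I. c r * cnj (c r') * complex_of_real (G r r'))"
  proof -
    have A: "(\<Sum>j\<in>Box. ch j (\<xi> r) * cnj (ch j (\<xi> r'))) = Dk (3*L+1) (fst (\<xi> r) - fst (\<xi> r')) * Dk (3*L+1) (snd (\<xi> r) - snd (\<xi> r'))" for r r'
      unfolding Box_def ch_diff using box_sum[where m="3*L" and t="(fst (\<xi> r) - fst (\<xi> r'), snd (\<xi> r) - snd (\<xi> r'))"] by simp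
    have AA: "(Dk (3*L+1) (fst (\<xi> r) - fst (\<xi> r')) * Dk (3*L+1) (snd (\<xi> r) - snd (\<xi> r'))) * cnj (Dk (3*L+1) (fst (\<xi> r) - fst (\<xi> r')) * Dk (3*L+1) (snd (\<xi> r) - snd (\<xi> r'))) = complex_of_real (G r r')" for r r'
      unfolding G_def complex_norm_square[symmetric] by (simp add: norm_mult power_mult_distrib)
    show ?thesis unfolding W_def frob by (simp only: A AA)
  qed
  also have "Re (\<Sum>r\<in>I. \<Sum>r'\<in>I. c r * cnj (c r') * complex_of_real (G r r')) \<le> (\<Sum>r\<in>I. (cmod (c r))^2 * (\<Sum>r'\<in>I. G r r'))"
  proof (rule quad_bound)
    fix r r'
    show "G r r' = G r' r" unfolding G_def using Dk_neg
      by (metis minus_diff_eq)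
    show "0 \<le> G r r'" unfolding G_def by simp
  qed
  finally show ?thesis unfolding V_def G_def .
qed



definition hb :: "nat \<Rightarrow> nat \<Rightarrow> nat \<Rightarrow> real" where
  "hb M P d = (if d = 0 then (real P)^2 else min ((real P)^2) ((real M / real d)^2))"

definition gb :: "nat \<Rightarrow> nat \<Rightarrow> nat \<Rightarrow> real" where
  "gb M P j = hb M P (min j (M - 1 - j))"

lemma hb_nonneg: "0 \<le> hb M P d" unfolding hb_def by simp

lemma gb_nonneg: "0 \<le> gb M P d" unfolding gb_def by (rule hb_nonneg)

lemma Dk_gb:
  assumes M: "1 \<le> M"
  shows "(cmod (Dk P t))^2 \<le> gb M P (nat \<lfloor>real M * frac t\<rfloor>)"
proof -
  define f where "f = frac t"
  define j where "j = nat \<lfloor>real M * f\<rfloor>"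
  define m where "m = min j (M - 1 - j)"
  have f01: "0 \<le> f" "f < 1" unfolding f_def by (auto simp: frac_lt_1)
  have Mpos: "0 < real M" using M by simp
  have fl0: "0 \<le> \<lfloor>real M * f\<rfloor>" using f01 Mpos by simp
  have jle: "real j \<le> real M * f" unfolding j_def using fl0 by (simp add: of_nat_nat)
  have jgt: "real M * f < real j + 1" unfolding j_def using fl0 by (simp add: of_nat_nat; linarith)
  have jM: "j < M"
  proof -
    have "real M * f < real M" using f01 Mpos by simp
    then have "real j < real M" using jle by linarith
    then show ?thesis by simp
  qed
  have P2: "(cmod (Dk P t))^2 \<le> (real P)^2" using Dk_le_P[of P t] by (intro power_mono) auto
  show ?thesis
  proof (cases "m = 0")
    case True
    then show ?thesis using P2 unfolding gb_def hb_def j_def[symmetric] f_def[symmetric] m_def[symmetric] by simp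
  next
    case False
    then have m1: "1 \<le> m" by simp
    have "real m \<le> real j" unfolding m_def by simp
    then have a1: "real m / real M \<le> f" using jle Mpos by (simp add: field_simps)
    have "real m \<le> real (M - 1 - j)" unfolding m_def by simp
    also have "\<dots> = real M - 1 - real j" using jM by simp
    finally have a2: "real m / real M \<le> 1 - f" using jgt Mpos by (simp add: field_simps)
    have mpos: "0 < real m / real M" using m1 Mpos by simp
    have mu: "real m / real M \<le> min f (1 - f)" using a1 a2 by simp
    have "cmod (Dk P t) \<le> 1 / min (frac t) (1 - frac t)"
      using mu mpos by (intro Dk_frac_bound) (simp add: f_def[symmetric])
    also have "\<dots> \<le> 1 / (real m / real M)"
    proof -
      have "0 < min (frac t) (1 - frac t)" using mu mpos unfolding f_def by linarith
      then have pp: "0 < min (frac t) (1 - frac t) * (real m / real M)" using mpos by (intro mult_pos_pos)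
      have mu': "real m / real M \<le> min (frac t) (1 - frac t)" using mu unfolding f_def .
      show ?thesis by (rule divide_left_mono[OF mu' _ pp]) simp
    qed
    also have "\<dots> = real M / real m" by simp
    finally have "(cmod (Dk P t))^2 \<le> (real M / real m)^2" by (intro power_mono) auto
    then show ?thesis using P2 False
      unfolding gb_def hb_def j_def[symmetric] f_def[symmetric] m_def[symmetric] by simp
  qed
qed

lemma gb_le: "gb M P j \<le> hb M P j + hb M P (M - Suc j)"
proof -
  have "gb M P j = hb M P j \<or> gb M P j = hb M P (M - Suc j)"
    unfolding gb_def by (simp add: min_def)
  then show ?thesis using hb_nonneg[of M P j] hb_nonneg[of M P "M - Suc j"] by linarith
qed

lemma tele:
  fixes a :: nat and A :: real
  assumes a: "1 \<le> a" and A: "0 \<le> A"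
  shows "(\<Sum>d<a+1+n. (if d \<le> a then B else A / (real d)^2)) \<le> real (a+1) * B + A * (1 / real a - 1 / real (a + n))"
proof (induction n)
  case 0
  have "(\<Sum>d<a+1. (if d \<le> a then B else A / (real d)^2)) = (\<Sum>d<a+1. B)"
    by (rule sum.cong) auto
  then show ?case by simp
next
  case (Suc n)
  have an: "0 < real (a+n)" using a by simp
  have "(\<Sum>d<a+1+Suc n. (if d \<le> a then B else A / (real d)^2))
      = (\<Sum>d<a+1+n. (if d \<le> a then B else A / (real d)^2)) + A / (real (a+1+n))^2"
    by simp
  also have "\<dots> \<le> real (a+1) * B + A * (1 / real a - 1 / real (a + n)) + A / (real (a+1+n))^2"
    using Suc.IH by simp
  also have "A / (real (a+1+n))^2 \<le> A * (1 / real (a+n) - 1 / real (a + Suc n))"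
  proof -
    have "1 / (real (a+1+n))^2 \<le> 1 / real (a+n) - 1 / real (a + Suc n)"
    proof -
      define x where "x = real (a+n)"
      have x0: "0 < x" using an x_def by simp
      have e1: "real (a+1+n) = x + 1" "real (a + Suc n) = x + 1" unfolding x_def by simp_all
      have eq: "1 / x - 1 / (x+1) = 1 / (x * (x+1))" using x0 by (simp add: field_simps)
      have "x * (x+1) \<le> (x+1)^2" using x0 by (simp add: power2_eq_square)
      then have "1 / (x+1)^2 \<le> 1 / (x * (x+1))" using x0 by (intro divide_left_mono) auto
      then show ?thesis unfolding e1 x_def[symmetric] eq .
    qed
    then show ?thesis using A by (simp add: mult_left_mono divide_inverse)
  qed
  finally show ?case by (simp add: algebra_simps)
qed

lemma hb_sum:
  assumes M: "1 \<le> M" and P: "1 \<le> P"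
  shows "(\<Sum>d<M. hb M P d) \<le> 2 * (real P)^2 + 2 * real M * real P"
proof -
  define t0 where "t0 = nat \<lceil>real M / real P\<rceil>"
  have Pp: "0 < real P" using P by simp
  have Mp: "0 < real M" using M by simp
  have t0ge: "real M / real P \<le> real t0" unfolding t0_def by linarith
  have t0lt: "real t0 < real M / real P + 1" unfolding t0_def using Mp Pp
    by (simp add: of_nat_nat; linarith)
  have t01: "1 \<le> t0"
  proof -
    have "0 < real M / real P" using Mp Pp by simp
    then have "0 < real t0" using t0ge by linarith
    then show ?thesis by simp
  qed
  define F where "F d = (if d \<le> t0 then (real P)^2 else (real M)^2 / (real d)^2)" for d
  have hF: "hb M P d \<le> F d" for d
  proof (cases "d \<le> t0")
    case True then show ?thesis unfolding hb_def F_def by auto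
  next
    case False
    then have "d \<noteq> 0" using t01 by simp
    then show ?thesis using False unfolding hb_def F_def by (simp add: power_divide)
  qed
  have F0: "0 \<le> F d" for d unfolding F_def by simp
  have "(\<Sum>d<M. hb M P d) \<le> (\<Sum>d<M. F d)" by (rule sum_mono) (rule hF)
  also have "\<dots> \<le> (\<Sum>d<t0+1+M. F d)" by (rule sum_mono2) (auto simp: F0)
  also have "\<dots> \<le> real (t0+1) * (real P)^2 + (real M)^2 * (1 / real t0 - 1 / real (t0 + M))"
    unfolding F_def by (rule tele[OF t01]) simp
  also have "\<dots> \<le> real (t0+1) * (real P)^2 + (real M)^2 * (1 / real t0)"
    by (intro add_left_mono mult_left_mono) auto
  also have "real (t0+1) * (real P)^2 \<le> (real M / real P + 2) * (real P)^2"
    using t0lt by (intro mult_right_mono) auto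
  also have "(real M)^2 * (1 / real t0) \<le> (real M)^2 * (1 / (real M / real P))"
  proof (rule mult_left_mono)
    have pp: "0 < real t0 * (real M / real P)" using t01 Mp Pp by (intro mult_pos_pos) auto
    show "1 / real t0 \<le> 1 / (real M / real P)" by (rule divide_left_mono[OF t0ge _ pp]) simp
  qed simp
  also have "(real M / real P + 2) * (real P)^2 + (real M)^2 * (1 / (real M / real P)) = 2 * (real P)^2 + 2 * real M * real P"
    using Mp Pp by (simp add: field_simps power2_eq_square)
  finally show ?thesis by simp
qed

lemma gb_sum:
  assumes M: "1 \<le> M" and P: "1 \<le> P"
  shows "(\<Sum>j<M. gb M P j) \<le> 4 * real P * (real P + real M)"
proof -
  have "(\<Sum>j<M. gb M P j) \<le> (\<Sum>j<M. hb M P j + hb M P (M - Suc j))" by (rule sum_mono) (rule gb_le)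
  also have "\<dots> = (\<Sum>j<M. hb M P j) + (\<Sum>j<M. hb M P j)"
    by (simp add: sum.distrib sum.nat_diff_reindex[where g="hb M P"])
  also have "\<dots> \<le> 2 * (2 * (real P)^2 + 2 * real M * real P)" using hb_sum[OF M P] by simp
  also have "\<dots> = 4 * real P * (real P + real M)" by (simp add: algebra_simps power2_eq_square)
  finally show ?thesis .
qed



lemma lattice_dist_le: "lattice_dist v \<le> norm (v - (real_of_int m, real_of_int k))"
  unfolding lattice_dist_def
  by (rule cInf_lower) (auto intro: bdd_belowI[where m=0])

lemma cell_facts:
  assumes M: "1 \<le> M"
  shows "nat \<lfloor>real M * frac x\<rfloor> < M"
    and "\<bar>real (nat \<lfloor>real M * frac x\<rfloor>) / real M - frac x\<bar> \<le> 1 / real M"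
proof -
  define j where "j = nat \<lfloor>real M * frac x\<rfloor>"
  have f01: "0 \<le> frac x" "frac x < 1" by (auto simp: frac_lt_1)
  have Mpos: "0 < real M" using M by simp
  have fl0: "0 \<le> \<lfloor>real M * frac x\<rfloor>" using f01 Mpos by simp
  have jle: "real j \<le> real M * frac x" unfolding j_def using fl0 by (simp add: of_nat_nat)
  have jgt: "real M * frac x < real j + 1" unfolding j_def using fl0 by (simp add: of_nat_nat; linarith)
  have "real M * frac x < real M" using f01 Mpos by simp
  then have "real j < real M" using jle by linarith
  then show "nat \<lfloor>real M * frac x\<rfloor> < M" unfolding j_def[symmetric] by simp
  have "\<bar>real j - real M * frac x\<bar> \<le> 1" using jle jgt by linarith
  then have A: "\<bar>(real j - real M * frac x) / real M\<bar> \<le> 1 / real M" using Mpos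
    by (simp add: abs_divide divide_right_mono)
  have B: "(real j - real M * frac x) / real M = real j / real M - frac x" using Mpos
    by (simp add: field_simps)
  have C: "\<bar>real j / real M - frac x\<bar> \<le> 1 / real M" using A unfolding B .
  then show "\<bar>real (nat \<lfloor>real M * frac x\<rfloor>) / real M - frac x\<bar> \<le> 1 / real M"
    unfolding j_def .
qed

lemma count_bound:
  fixes \<xi> :: "'r \<Rightarrow> real \<times> real" and K \<delta> :: real
  assumes I: "finite I" and M: "1 \<le> M" and \<delta>: "sqrt 2 / real M \<le> \<delta>"
  and K: "\<And>\<alpha>. real (card {r'\<in>I. lattice_dist (\<xi> r' - \<alpha>) \<le> \<delta>}) \<le> K"
  shows "(\<Sum>r'\<in>I. (cmod (Dk P (fst (\<xi> r) - fst (\<xi> r'))))^2 * (cmod (Dk P (snd (\<xi> r) - snd (\<xi> r'))))^2)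
     \<le> K * (\<Sum>j<M. gb M P j)^2"
proof -
  define \<theta>1 where "\<theta>1 r' = fst (\<xi> r) - fst (\<xi> r')" for r'
  define \<theta>2 where "\<theta>2 r' = snd (\<xi> r) - snd (\<xi> r')" for r'
  define cl where "cl r' = (nat \<lfloor>real M * frac (\<theta>1 r')\<rfloor>, nat \<lfloor>real M * frac (\<theta>2 r')\<rfloor>)" for r'
  define f where "f r' = (cmod (Dk P (\<theta>1 r')))^2 * (cmod (Dk P (\<theta>2 r')))^2" for r'
  define T where "T = {..<M} \<times> {..<M}"
  have Mpos: "0 < real M" using M by simp
  have clM: "cl ` I \<subseteq> T" unfolding T_def cl_def using cell_facts(1)[OF M] by auto
  have fb: "f r' \<le> gb M P (fst (cl r')) * gb M P (snd (cl r'))" for r'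
    unfolding f_def cl_def using Dk_gb[OF M, of P "\<theta>1 r'"] Dk_gb[OF M, of P "\<theta>2 r'"]
    by (simp add: mult_mono gb_nonneg)
  have fib: "real (card {r'\<in>I. cl r' = c}) \<le> K" for c
  proof -
    define \<alpha> where "\<alpha> = (fst (\<xi> r) - real (fst c) / real M, snd (\<xi> r) - real (snd c) / real M)"
    have "{r'\<in>I. cl r' = c} \<subseteq> {r'\<in>I. lattice_dist (\<xi> r' - \<alpha>) \<le> \<delta>}"
    proof (intro subsetI)
      fix r' assume "r' \<in> {r'\<in>I. cl r' = c}"
      then have r': "r' \<in> I" "cl r' = c" by auto
      define u where "u = real (fst c) / real M - frac (\<theta>1 r')"
      define v where "v = real (snd c) / real M - frac (\<theta>2 r')"
      have hu: "\<bar>u\<bar> \<le> 1 / real M" unfolding u_def using cell_facts(2)[OF M, of "\<theta>1 r'"] r'(2)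
        unfolding cl_def by auto
      have hv: "\<bar>v\<bar> \<le> 1 / real M" unfolding v_def using cell_facts(2)[OF M, of "\<theta>2 r'"] r'(2)
        unfolding cl_def by auto
      have eqv: "\<xi> r' - \<alpha> - (real_of_int (- \<lfloor>\<theta>1 r'\<rfloor>), real_of_int (- \<lfloor>\<theta>2 r'\<rfloor>)) = (u, v)"
        unfolding u_def v_def \<alpha>_def \<theta>1_def \<theta>2_def frac_def by (simp add: prod_eq_iff)
      have u2: "u^2 \<le> (1 / real M)^2" using hu by (metis abs_le_square_iff abs_of_nonneg divide_nonneg_nonneg of_nat_0_le_iff zero_le_one abs_le_square_iff)
      have v2: "v^2 \<le> (1 / real M)^2" using hv by (metis abs_le_square_iff abs_of_nonneg divide_nonneg_nonneg of_nat_0_le_iff zero_le_one)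
      have "lattice_dist (\<xi> r' - \<alpha>) \<le> norm (u, v)" using lattice_dist_le[of "\<xi> r' - \<alpha>"] eqv by metis
      also have "\<dots> = sqrt (u^2 + v^2)" by (simp add: norm_Pair)
      also have "\<dots> \<le> sqrt ((1 / real M)^2 + (1 / real M)^2)" using u2 v2 by simp
      also have "\<dots> = sqrt 2 / real M" using Mpos by (simp add: real_sqrt_divide power_divide)
      finally show "r' \<in> {r'\<in>I. lattice_dist (\<xi> r' - \<alpha>) \<le> \<delta>}" using \<delta> r'(1) by simp
    qed
    then have "card {r'\<in>I. cl r' = c} \<le> card {r'\<in>I. lattice_dist (\<xi> r' - \<alpha>) \<le> \<delta>}"
      by (rule card_mono[rotated]) (simp add: I)
    then have "real (card {r'\<in>I. cl r' = c}) \<le> real (card {r'\<in>I. lattice_dist (\<xi> r' - \<alpha>) \<le> \<delta>})" by simp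
    also have "\<dots> \<le> K" by (rule K)
    finally show ?thesis .
  qed
  have K0: "0 \<le> K" using K[of 0] by (meson of_nat_0_le_iff order_trans)
  have "(\<Sum>r'\<in>I. f r') = (\<Sum>c\<in>T. \<Sum>r'\<in>{r'\<in>I. cl r' = c}. f r')"
    by (rule sum.group[symmetric, OF I _ clM]) (simp add: T_def)
  also have "\<dots> \<le> (\<Sum>c\<in>T. K * (gb M P (fst c) * gb M P (snd c)))"
  proof (rule sum_mono)
    fix c assume "c \<in> T"
    have "(\<Sum>r'\<in>{r'\<in>I. cl r' = c}. f r') \<le> (\<Sum>r'\<in>{r'\<in>I. cl r' = c}. gb M P (fst c) * gb M P (snd c))"
      by (rule sum_mono) (use fb in auto)
    also have "\<dots> = real (card {r'\<in>I. cl r' = c}) * (gb M P (fst c) * gb M P (snd c))" by simp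
    also have "\<dots> \<le> K * (gb M P (fst c) * gb M P (snd c))"
      by (rule mult_right_mono[OF fib]) (simp add: gb_nonneg)
    finally show "(\<Sum>r'\<in>{r'\<in>I. cl r' = c}. f r') \<le> K * (gb M P (fst c) * gb M P (snd c))" .
  qed
  also have "\<dots> = K * (\<Sum>c\<in>T. gb M P (fst c) * gb M P (snd c))" by (simp add: sum_distrib_left)
  also have "(\<Sum>c\<in>T. gb M P (fst c) * gb M P (snd c)) = (\<Sum>j<M. gb M P j)^2"
    unfolding T_def power2_eq_square sum_product by (simp add: sum.cartesian_product case_prod_beta)
  finally show ?thesis unfolding f_def \<theta>1_def \<theta>2_def .
qed



definition cpx :: "int \<times> int \<Rightarrow> complex" where
  "cpx p = Complex (real_of_int (fst p)) (real_of_int (snd p))"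

lemma inj_cpx: "inj cpx"
  unfolding inj_def cpx_def by (auto simp: prod_eq_iff)

lemma gint_cpx: "gint z \<Longrightarrow> z = cpx (\<lfloor>Re z\<rfloor>, \<lfloor>Im z\<rfloor>)"
  unfolding gint_def cpx_def by (auto simp: complex_eq_iff elim!: Ints_cases)

lemma gint_cpx' [simp]: "gint (cpx p)"
  unfolding gint_def cpx_def by simp

lemma fin_gint_ball: "finite {z. gint z \<and> cmod z \<le> r}"
proof -
  define R where "R = \<lceil>r\<rceil>"
  have "{z. gint z \<and> cmod z \<le> r} \<subseteq> cpx ` ({-R..R} \<times> {-R..R})"
  proof
    fix z assume z: "z \<in> {z. gint z \<and> cmod z \<le> r}"
    then have g: "gint z" and c: "cmod z \<le> r" by auto
    have "\<bar>Re z\<bar> \<le> r" using abs_Re_le_cmod[of z] c by linarith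
    moreover have "\<bar>Im z\<bar> \<le> r" using abs_Im_le_cmod[of z] c by linarith
    moreover have "Re z = real_of_int \<lfloor>Re z\<rfloor>" "Im z = real_of_int \<lfloor>Im z\<rfloor>"
      using g unfolding gint_def by (auto elim!: Ints_cases)
    ultimately have "\<bar>\<lfloor>Re z\<rfloor>\<bar> \<le> R" "\<bar>\<lfloor>Im z\<rfloor>\<bar> \<le> R" unfolding R_def
      by (metis of_int_abs ceiling_mono ceiling_of_int)+
    then show "z \<in> cpx ` ({-R..R} \<times> {-R..R})" using gint_cpx[OF g] by (auto intro!: image_eqI)
  qed
  moreover have "finite (cpx ` ({-R..R} \<times> {-R..R}))" by simp
  ultimately show ?thesis by (rule finite_subset)
qed

lemma gint_mult: "gint a \<Longrightarrow> gint b \<Longrightarrow> gint (a * b)"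
  unfolding gint_def by auto

lemma gint_diff: "gint a \<Longrightarrow> gint b \<Longrightarrow> gint (a - b)"
  unfolding gint_def by auto

lemma finite_rrs:
  assumes q: "gint q" "q \<noteq> 0" and R: "reduced_residue_system Rq q"
  shows "finite Rq"
proof -
  define \<kappa> where "\<kappa> w = Complex (real_of_int (round (Re w))) (real_of_int (round (Im w)))" for w
  define \<rho> where "\<rho> a = a - q * \<kappa> (a / q)" for a
  have gk: "gint (\<kappa> w)" for w unfolding \<kappa>_def gint_def by simp
  have inj: "inj_on \<rho> Rq"
  proof (rule inj_onI)
    fix a b assume a: "a \<in> Rq" and b: "b \<in> Rq" and eq: "\<rho> a = \<rho> b"
    then have "a - b = q * (\<kappa> (a/q) - \<kappa> (b/q))" unfolding \<rho>_def by (simp add: algebra_simps)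
    then have "gdvd q (a - b)" unfolding gdvd_def using gint_diff[OF gk gk] by blast
    then have "gcong a b q" unfolding gcong_def .
    then show "a = b" using R a b unfolding reduced_residue_system_def by blast
  qed
  have sub: "\<rho> ` Rq \<subseteq> {z. gint z \<and> cmod z \<le> cmod q}"
  proof safe
    fix a assume a: "a \<in> Rq"
    then have ga: "gint a" using R unfolding reduced_residue_system_def by blast
    show "gint (\<rho> a)" unfolding \<rho>_def by (intro gint_diff gint_mult ga q gk)
    have "\<rho> a = q * (a / q - \<kappa> (a / q))" unfolding \<rho>_def using q by (simp add: algebra_simps)
    then have eqn: "cmod (\<rho> a) = cmod q * cmod (a / q - \<kappa> (a / q))" by (simp add: norm_mult)
    have X: "cmod (a / q - \<kappa> (a / q)) \<le> 1"
    proof -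
      have "cmod (a / q - \<kappa> (a / q)) \<le> \<bar>Re (a / q - \<kappa> (a / q))\<bar> + \<bar>Im (a / q - \<kappa> (a / q))\<bar>" by (rule cmod_le)
      also have "\<bar>Re (a / q - \<kappa> (a / q))\<bar> \<le> 1/2" unfolding \<kappa>_def
        using of_int_round_abs_le[of "Re (a/q)"] by (simp add: abs_minus_commute[of "Re (a/q)"])
      also have "\<bar>Im (a / q - \<kappa> (a / q))\<bar> \<le> 1/2" unfolding \<kappa>_def
        using of_int_round_abs_le[of "Im (a/q)"] by (simp add: abs_minus_commute[of "Im (a/q)"])
      finally show ?thesis by simp
    qed
    show "cmod (\<rho> a) \<le> cmod q" unfolding eqn using mult_left_mono[OF X, of "cmod q"] by simp
  qed
  have "finite (\<rho> ` Rq)" by (rule finite_subset[OF sub fin_gint_ball])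
  then show ?thesis using inj by (simp add: finite_image_iff)
qed

lemma xi_fst: "fst (xi a q) = Re (a / q)"
  unfolding xi_def gnorm_def Re_divide by simp

lemma xi_snd: "snd (xi a q) = - Im (a / q)"
proof -
  have "Re a * Im q - Im a * Re q = - (Im a * Re q - Re a * Im q)" by simp
  then show ?thesis unfolding xi_def gnorm_def Im_divide by (simp only: snd_conv minus_divide_left)
qed

lemma ReCm: "Re (Complex x y * w) = x * Re w - y * Im w" by simp

lemma phase_ch: "e (Re (cpx p * a / q)) = ch p (xi a q)"
proof -
  have eq: "cpx p * a / q = cpx p * (a / q)" by (rule times_divide_eq_right[symmetric])
  have "Re (cpx p * (a / q)) = real_of_int (fst p) * Re (a / q) - real_of_int (snd p) * Im (a / q)"
    unfolding cpx_def by (rule ReCm)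
  then have "Re (cpx p * a / q) = real_of_int (fst p) * Re (a / q) - real_of_int (snd p) * Im (a / q)"
    unfolding eq .
  also have "\<dots> = real_of_int (fst p) * fst (xi a q) + real_of_int (snd p) * snd (xi a q)"
    unfolding xi_fst xi_snd by simp
  finally show ?thesis unfolding ch_def by simp
qed



theorem corollary1:
  "\<exists>C>0. \<forall>(Q::nat) (N::nat) (an::complex \<Rightarrow> complex) (S::complex set) (\<Delta>::real)
       (R::complex \<Rightarrow> complex set).
     N \<ge> 2 \<longrightarrow>
     S \<subseteq> {q. gint q \<and> q \<noteq> 0 \<and> cmod q \<le> sqrt (real Q)} \<longrightarrow>
     0 < \<Delta> \<longrightarrow> \<Delta> \<le> 1/2 \<longrightarrow>
     (\<forall>q\<in>S. reduced_residue_system (R q) q) \<longrightarrow>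
     (\<Sum>q\<in>S. \<Sum>a\<in>R q.
        (cmod (\<Sum>n\<in>{n. gint n \<and> gnorm n \<le> real N}. an n * e (Re (n * a / q))))^2)
     \<le> C * Kfun S R \<Delta> * (real N + 1 / \<Delta>) *
        (\<Sum>n\<in>{n. gint n \<and> gnorm n \<le> real N}. (cmod (an n))^2)"
proof (intro exI[of _ "7776::real"] conjI allI impI)
  show "0 < (7776::real)" by simp
  fix Q N :: nat and an :: "complex \<Rightarrow> complex" and S :: "complex set" and \<Delta> :: real
    and R :: "complex \<Rightarrow> complex set"
  assume N2: "2 \<le> N" and S: "S \<subseteq> {q. gint q \<and> q \<noteq> 0 \<and> cmod q \<le> sqrt (real Q)}"
    and D0: "0 < \<Delta>" and D1: "\<Delta> \<le> 1/2" and RR: "\<forall>q\<in>S. reduced_residue_system (R q) q"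
  define L where "L = nat \<lfloor>sqrt (real N)\<rfloor>"
  define P where "P = 3*L+1"
  define \<delta> where "\<delta> = sqrt \<Delta>"
  define M where "M = nat \<lceil>sqrt 2 / \<delta>\<rceil>"
  define Dc where "Dc = {n. gint n \<and> gnorm n \<le> real N}"
  define Dp where "Dp = {p \<in> {-int L..int L} \<times> {-int L..int L}. real_of_int ((fst p)^2 + (snd p)^2) \<le> real N}"
  define I where "I = Sigma S R"
  define \<xi> where "\<xi> r = xi (snd r) (fst r)" for r :: "complex \<times> complex"
  define K where "K = Kfun S R \<Delta>"
  define b where "b p = an (cpx p)" for p
  have "S \<subseteq> {z. gint z \<and> cmod z \<le> sqrt (real Q)}" using S by auto
  then have finS: "finite S" using fin_gint_ball by (rule finite_subset)
  have finR: "finite (R q)" if "q \<in> S" for q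
    using S that RR by (intro finite_rrs[of q]) auto
  have finI: "finite I" unfolding I_def using finS finR by (rule finite_SigmaI)
  have fl0: "0 \<le> \<lfloor>sqrt (real N)\<rfloor>" by simp
  have Lr: "real L = real_of_int \<lfloor>sqrt (real N)\<rfloor>" unfolding L_def using fl0 by (rule of_nat_nat)
  have sqN: "real L \<le> sqrt (real N)" unfolding Lr by (rule of_int_floor_le)
  have boundx: "\<bar>x\<bar> \<le> int L" if "real_of_int (x^2) \<le> real N" for x :: int
  proof -
    have a1: "sqrt ((real_of_int x)^2) = \<bar>real_of_int x\<bar>" by (rule real_sqrt_abs)
    have a2: "real_of_int (x^2) = (real_of_int x)^2" by simp
    have "real_of_int \<bar>x\<bar> = sqrt ((real_of_int x)^2)" unfolding a1 by simp
    also have "\<dots> \<le> sqrt (real N)" using that unfolding a2 by (rule real_sqrt_le_mono)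
    finally have "\<bar>x\<bar> \<le> \<lfloor>sqrt (real N)\<rfloor>" by (simp add: le_floor_iff)
    then show ?thesis unfolding L_def by simp
  qed
  have Dc_eq: "Dc = cpx ` Dp"
  proof
    show "Dc \<subseteq> cpx ` Dp"
    proof
      fix n assume n: "n \<in> Dc"
      then have g: "gint n" and gn: "gnorm n \<le> real N" unfolding Dc_def by auto
      define p where "p = (\<lfloor>Re n\<rfloor>, \<lfloor>Im n\<rfloor>)"
      have np: "n = cpx p" unfolding p_def by (rule gint_cpx[OF g])
      have "gnorm n = real_of_int ((fst p)^2 + (snd p)^2)" unfolding np cpx_def gnorm_def by simp
      then have gp: "real_of_int ((fst p)^2 + (snd p)^2) \<le> real N" using gn by simp
      have "real_of_int ((fst p)^2) \<le> real N" "real_of_int ((snd p)^2) \<le> real N"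
      proof -
        have s1: "0 \<le> (real_of_int (fst p))^2" "0 \<le> (real_of_int (snd p))^2" by simp_all
        have gp': "(real_of_int (fst p))^2 + (real_of_int (snd p))^2 \<le> real N" using gp by simp
        have "(real_of_int (fst p))^2 \<le> real N" "(real_of_int (snd p))^2 \<le> real N" using gp' s1 by linarith+
        then show "real_of_int ((fst p)^2) \<le> real N" "real_of_int ((snd p)^2) \<le> real N" by simp_all
      qed
      then have "\<bar>fst p\<bar> \<le> int L" "\<bar>snd p\<bar> \<le> int L" using boundx by auto
      then have "p \<in> Dp" using gp unfolding Dp_def by (auto simp: mem_Times_iff abs_le_iff)
      then show "n \<in> cpx ` Dp" using np by auto
    qed
    show "cpx ` Dp \<subseteq> Dc"
    proof
      fix n assume "n \<in> cpx ` Dp"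
      then obtain p where p: "p \<in> Dp" and np: "n = cpx p" by auto
      have "gnorm n = real_of_int ((fst p)^2 + (snd p)^2)" unfolding np cpx_def gnorm_def by simp
      then show "n \<in> Dc" using p unfolding Dc_def Dp_def np by auto
    qed
  qed
  have finDp: "finite Dp" unfolding Dp_def by simp
  have DpBox: "Dp \<subseteq> {-int L..int L} \<times> {-int L..int L}" unfolding Dp_def by auto
  have injD: "inj_on cpx Dp" using inj_cpx by (rule inj_on_subset) simp
  have LHS: "(\<Sum>q\<in>S. \<Sum>a\<in>R q. (cmod (\<Sum>n\<in>Dc. an n * e (Re (n * a / q))))^2)
      = (\<Sum>r\<in>I. (cmod (\<Sum>p\<in>Dp. b p * ch p (\<xi> r)))^2)"
  proof -
    have "(\<Sum>q\<in>S. \<Sum>a\<in>R q. (cmod (\<Sum>n\<in>Dc. an n * e (Re (n * a / q))))^2)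
        = (\<Sum>q\<in>S. \<Sum>a\<in>R q. (cmod (\<Sum>p\<in>Dp. b p * ch p (\<xi> (q, a))))^2)"
      unfolding Dc_eq by (simp add: sum.reindex[OF injD] b_def \<xi>_def phase_ch)
    also have "\<dots> = (\<Sum>r\<in>I. (cmod (\<Sum>p\<in>Dp. b p * ch p (\<xi> r)))^2)"
      unfolding I_def using finS finR by (subst sum.Sigma) (auto simp: case_prod_beta)
    finally show ?thesis .
  qed
  have Zeq: "(\<Sum>n\<in>Dc. (cmod (an n))^2) = (\<Sum>p\<in>Dp. (cmod (b p))^2)"
    unfolding Dc_eq by (simp add: sum.reindex[OF injD] b_def)
  have Z0: "0 \<le> (\<Sum>p\<in>Dp. (cmod (b p))^2)" by (simp add: sum_nonneg)
  define A where "A \<alpha> = {(a, q). q \<in> S \<and> a \<in> R q \<and> lattice_dist (xi a q - \<alpha>) \<le> sqrt \<Delta>}" for \<alpha>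
  have K_def': "K = (SUP \<alpha>\<in>UNIV. real (card (A \<alpha>)))" unfolding K_def Kfun_def A_def ..
  have finSI: "finite (prod.swap ` I)" using finI by simp
  have AI: "A \<alpha> \<subseteq> prod.swap ` I" for \<alpha> unfolding A_def I_def by (auto simp: image_iff)
  have bdd: "bdd_above (range (\<lambda>\<alpha>. real (card (A \<alpha>))))"
  proof (rule bdd_aboveI2)
    fix \<alpha> show "real (card (A \<alpha>)) \<le> real (card (prod.swap ` I))"
      using card_mono[OF finSI AI] by simp
  qed
  have cardA: "real (card (A \<alpha>)) \<le> K" for \<alpha>
    unfolding K_def' by (rule cSUP_upper[OF UNIV_I bdd])
  have K0: "0 \<le> K" using cardA[of 0] by (meson of_nat_0_le_iff order_trans)
  have Kb: "real (card {r'\<in>I. lattice_dist (\<xi> r' - \<alpha>) \<le> \<delta>}) \<le> K" for \<alpha>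
  proof -
    have eqs: "{r'\<in>I. lattice_dist (\<xi> r' - \<alpha>) \<le> \<delta>} = prod.swap ` A \<alpha>"
      unfolding A_def I_def \<xi>_def \<delta>_def by (auto simp: image_iff)
    have "inj_on prod.swap (A \<alpha>)" by (metis inj_onI swap_swap)
    then have "card {r'\<in>I. lattice_dist (\<xi> r' - \<alpha>) \<le> \<delta>} = card (A \<alpha>)" unfolding eqs by (rule card_image)
    then show ?thesis using cardA[of \<alpha>] by simp
  qed
  have dpos: "0 < \<delta>" unfolding \<delta>_def using D0 by simp
  define x where "x = sqrt 2 / \<delta>"
  have x2: "x^2 = 2 / \<Delta>" unfolding x_def \<delta>_def using D0 by (simp add: power_divide)
  have x_ge: "2 \<le> x"
  proof -
    have "4 \<le> x^2" unfolding x2 using D0 D1 by (simp add: field_simps)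
    moreover have "0 \<le> x" unfolding x_def using dpos by simp
    ultimately show ?thesis using power2_le_imp_le[of 2 x] by simp
  qed
  have M_ge: "x \<le> real M" unfolding M_def x_def by linarith
  have M_lt: "real M < x + 1" unfolding M_def x_def using x_ge unfolding x_def
    by (simp add: of_nat_nat; linarith)
  have M1: "1 \<le> M" using M_ge x_ge by simp
  have Mdel: "sqrt 2 / real M \<le> \<delta>"
  proof -
    have "sqrt 2 / real M \<le> sqrt 2 / x" using M_ge x_ge by (intro divide_left_mono) auto
    also have "\<dots> = \<delta>" unfolding x_def using dpos by simp
    finally show ?thesis .
  qed
  have M2: "(real M)^2 \<le> 8 / \<Delta>"
  proof -
    have "real M \<le> 2 * x" using M_lt x_ge by simp
    then have "(real M)^2 \<le> (2 * x)^2" by (intro power_mono) auto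
    also have "\<dots> = 8 / \<Delta>" using x2 by (simp add: power_mult_distrib)
    finally show ?thesis .
  qed
  have P1: "1 \<le> P" unfolding P_def by simp
  have PL: "real P \<le> 3 * (real L + 1)" unfolding P_def by simp
  have L2: "(real L)^2 \<le> real N" using sqN by (metis of_nat_0_le_iff power_mono real_sqrt_pow2 of_nat_0_le_iff)
  have P2: "(real P)^2 \<le> 27 * real N"
  proof -
    have "(real P)^2 \<le> (3 * (real L + 1))^2" using PL by (intro power_mono) auto
    also have "\<dots> = 9 * (real L + 1)^2" by (simp add: power2_eq_square algebra_simps)
    finally have a: "(real P)^2 \<le> 9 * (real L + 1)^2" .
    have "0 \<le> (real L - 1)^2" by simp
    then have b: "(real L + 1)^2 \<le> 2 * (real L)^2 + 2" by (simp add: power2_eq_square algebra_simps)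
    have N2r: "2 \<le> real N" using N2 by simp
    show ?thesis using a b L2 N2r by linarith
  qed
  define B where "B = 144 * K * (real P + real M)^2"
  have B0: "0 \<le> B" unfolding B_def using K0 by simp
  have H: "(\<Sum>p\<in>Dp. (cmod (\<Sum>r\<in>I. c r * ch p (\<xi> r)))^2) \<le> B * (\<Sum>r\<in>I. (cmod (c r))^2)" for c
  proof -
    define W where "W r = (\<Sum>r'\<in>I. (cmod (Dk (3*L+1) (fst (\<xi> r) - fst (\<xi> r'))))^2 * (cmod (Dk (3*L+1) (snd (\<xi> r) - snd (\<xi> r'))))^2)" for r
    have Wb: "W r \<le> K * (4 * real P * (real P + real M))^2" for r
    proof -
      have "W r \<le> K * (\<Sum>j<M. gb M P j)^2" unfolding W_def P_def
        by (rule count_bound[OF finI M1 Mdel Kb])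
      also have "\<dots> \<le> K * (4 * real P * (real P + real M))^2"
        using gb_sum[OF M1 P1] K0 by (intro mult_left_mono power_mono) (auto simp: sum_nonneg gb_nonneg)
      finally show ?thesis .
    qed
    have "(real (L+1))^2 * (\<Sum>p\<in>Dp. (cmod (\<Sum>r\<in>I. c r * ch p (\<xi> r)))^2) \<le> (\<Sum>r\<in>I. (cmod (c r))^2 * W r)"
      unfolding W_def by (rule kernel[OF finI DpBox])
    also have "\<dots> \<le> (\<Sum>r\<in>I. (cmod (c r))^2 * (K * (4 * real P * (real P + real M))^2))"
      by (intro sum_mono mult_left_mono Wb) simp
    also have "\<dots> = (K * (4 * real P * (real P + real M))^2) * (\<Sum>r\<in>I. (cmod (c r))^2)"
      by (simp add: sum_distrib_right mult.commute)
    also have "K * (4 * real P * (real P + real M))^2 \<le> (real (L+1))^2 * B"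
    proof -
      have "(real P)^2 \<le> 9 * (real (L+1))^2"
      proof -
        have "(real P)^2 \<le> (3 * (real L + 1))^2" using PL by (intro power_mono) auto
        moreover have "(3 * (real L + 1))^2 = 9 * (real (L+1))^2" by (simp add: power2_eq_square algebra_simps)
        ultimately show ?thesis by (rule ord_le_eq_trans)
      qed
      then have "16 * (real P)^2 * (real P + real M)^2 \<le> 16 * (9 * (real (L+1))^2) * (real P + real M)^2"
        by (intro mult_right_mono mult_left_mono) auto
      then have mono1: "K * (16 * (real P)^2 * (real P + real M)^2) \<le> K * (16 * (9 * (real (L+1))^2) * (real P + real M)^2)"
        by (rule mult_left_mono[OF _ K0])
      have eq1: "(4 * real P * (real P + real M))^2 = 16 * (real P)^2 * (real P + real M)^2"
        by (simp add: power_mult_distrib)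
      have eq2: "K * (16 * (9 * (real (L+1))^2) * (real P + real M)^2) = (real (L+1))^2 * B"
        unfolding B_def by (simp add: algebra_simps)
      have "K * (4 * real P * (real P + real M))^2 = K * (16 * (real P)^2 * (real P + real M)^2)" unfolding eq1 ..
      also have "\<dots> \<le> K * (16 * (9 * (real (L+1))^2) * (real P + real M)^2)" by (rule mono1)
      also have "\<dots> = (real (L+1))^2 * B" by (rule eq2)
      finally show ?thesis .
    qed
    then have "(K * (4 * real P * (real P + real M))^2) * (\<Sum>r\<in>I. (cmod (c r))^2) \<le> ((real (L+1))^2 * B) * (\<Sum>r\<in>I. (cmod (c r))^2)"
      by (rule mult_right_mono) (simp add: sum_nonneg)
    finally have "(real (L+1))^2 * (\<Sum>p\<in>Dp. (cmod (\<Sum>r\<in>I. c r * ch p (\<xi> r)))^2) \<le> (real (L+1))^2 * (B * (\<Sum>r\<in>I. (cmod (c r))^2))"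
      by (simp add: mult_ac)
    then show ?thesis by (rule mult_left_le_imp_le) simp
  qed
  have main: "(\<Sum>r\<in>I. (cmod (\<Sum>p\<in>Dp. b p * ch p (\<xi> r)))^2) \<le> B * (\<Sum>p\<in>Dp. (cmod (b p))^2)"
    by (rule duality[OF finDp finI B0 H])
  have Bb: "B \<le> 7776 * K * (real N + 1 / \<Delta>)"
  proof -
    have "(real P + real M)^2 \<le> 2 * (real P)^2 + 2 * (real M)^2"
    proof -
      have "0 \<le> (real P - real M)^2" by simp
      then show ?thesis by (simp add: power2_eq_square algebra_simps)
    qed
    also have "\<dots> \<le> 2 * (27 * real N) + 2 * (8 / \<Delta>)" using P2 M2 by linarith
    also have "\<dots> \<le> 54 * (real N + 1 / \<Delta>)" using D0 by (simp add: field_simps)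
    finally have kk: "K * (real P + real M)^2 \<le> K * (54 * (real N + 1 / \<Delta>))" using K0 by (rule mult_left_mono)
    have "B = 144 * (K * (real P + real M)^2)" unfolding B_def by (simp only: mult.assoc)
    also have "\<dots> \<le> 144 * (K * (54 * (real N + 1 / \<Delta>)))" using kk by (rule mult_left_mono) simp
    also have "\<dots> = 7776 * K * (real N + 1 / \<Delta>)" by simp
    finally show ?thesis .
  qed
  have "(\<Sum>q\<in>S. \<Sum>a\<in>R q. (cmod (\<Sum>n\<in>Dc. an n * e (Re (n * a / q))))^2) \<le> B * (\<Sum>n\<in>Dc. (cmod (an n))^2)"
    using main unfolding LHS Zeq .
  also have "\<dots> \<le> (7776 * K * (real N + 1 / \<Delta>)) * (\<Sum>n\<in>Dc. (cmod (an n))^2)"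
    using Bb Z0 unfolding Zeq by (rule mult_right_mono)
  finally show "(\<Sum>q\<in>S. \<Sum>a\<in>R q. (cmod (\<Sum>n\<in>{n. gint n \<and> gnorm n \<le> real N}. an n * e (Re (n * a / q))))^2)
     \<le> 7776 * Kfun S R \<Delta> * (real N + 1 / \<Delta>) * (\<Sum>n\<in>{n. gint n \<and> gnorm n \<le> real N}. (cmod (an n))^2)"
    unfolding Dc_def K_def .
qed


end
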